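(* Let $\mathcal{A}\subseteq\mathbb{R}^3$ be measurable with finite positive measure, $k_0,\eta,\sigma^2>0$, and for $k\in\{1,2\}$ let $\mathsf{G}_k\in L^2(\mathcal{A})$ with $\mathsf{g}_k=\int_{\mathcal{A}}|\mathsf{G}_k|^2>0$, $\mathsf{H}_k=\frac{\mathrm{j}k_0\eta}{\sqrt{4\pi}}\mathsf{G}_k$, $A_{\mathsf{u},k}>0$, $\mathsf{J}_{\mathsf{ul},k}\in\mathbb{C}$, $\overline{\gamma}_{\mathsf{ul},k}=\frac{A_{\mathsf{u},k}^2|\mathsf{J}_{\mathsf{ul},k}|^2k_0^2\eta^2}{4\pi\sigma^2}$, and $\rho=\frac{\int_{\mathcal{A}}\mathsf{G}_1^*\mathsf{G}_2}{\sqrt{\mathsf{g}_1\mathsf{g}_2}}$. Consider SIC decoding with order $1\rightarrow2$ of the uplink observation $\mathsf{Y}(\mathbf{r})=\sum_{k=1}^2\mathsf{H}_k(\mathbf{r})\mathsf{J}_{\mathsf{ul},k}A_{\mathsf{u},k}s_{\mathsf{ul},k}+\mathsf{N}_{\mathsf{ul}}(\mathbf{r})$: user 1 is decoded first by whitening the interference-plus-noise $\mathsf{H}_2\mathsf{J}_{\mathsf{ul},2}A_{\mathsf{u},2}s_{\mathsf{ul},2}+\mathsf{N}_{\mathsf{ul}}$ with the kernel $\delta(\mathbf{r}'-\mathbf{r})+\mu_2\mathsf{G}_2(\mathbf{r}')\mathsf{G}_2^*(\mathbf{r})$, $\mu_2=-\frac{1}{\mathsf{g}_2}\pm\frac{1}{\mathsf{g}_2\sqrt{1+\overline{\gamma}_{\mathsf{ul},2}\mathsf{g}_2}}$,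 followed by MRC matched to the whitened channel $\overline{\mathsf{H}}_1(\mathbf{r}')=\mathsf{H}_1(\mathbf{r}')+\mu_2\mathsf{G}_2(\mathbf{r}')\int_{\mathcal{A}}\mathsf{G}_2^*\mathsf{H}_1$, giving SNR $\gamma_{\mathsf{ul},1}=\frac{A_{\mathsf{u},1}^2|\mathsf{J}_{\mathsf{ul},1}|^2}{\sigma^2}\int_{\mathcal{A}}|\overline{\mathsf{H}}_1|^2$; then user 2 is decoded after cancelling user 1's signal, with MRC detector $\mathsf{H}_2/\sqrt{\int_{\mathcal{A}}|\mathsf{H}_2|^2}$, giving SNR $\gamma_{\mathsf{ul},2}=\frac{A_{\mathsf{u},2}^2|\mathsf{J}_{\mathsf{ul},2}|^2}{\sigma^2}\int_{\mathcal{A}}|\mathsf{H}_2|^2$. Let $\mathsf{R}_{\mathsf{ul},k}^{1\rightarrow2}=\log_2(1+\gamma_{\mathsf{ul},k})$. Then $$\mathsf{R}_{\mathsf{ul},1}^{1\rightarrow2}=\log_2\!\left(1+\overline{\gamma}_{\mathsf{ul},1}\mathsf{g}_1\left(1-\frac{\overline{\gamma}_{\mathsf{ul},2}\mathsf{g}_2|\rho|^2}{1+\overline{\gamma}_{\mathsf{ul},2}\mathsf{g}_2}\right)\right),\qquad \mathsf{R}_{\mathsf{ul},2}^{1\rightarrow2}=\log_2(1+\overline{\gamma}_{\mathsf{ul},2}\mathsf{g}_2),$$ and $$\mathsf{C}_{\mathsf{ul}}^{1\rightarrow2}=\mathsf{R}_{\mathsf{ul},1}^{1\rightarrow2}+\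mathsf{R}_{\mathsf{ul},2}^{1\rightarrow2}=\log_2\!\Big(1+\overline{\gamma}_{\mathsf{ul},1}\overline{\gamma}_{\mathsf{ul},2}\mathsf{g}_1\mathsf{g}_2(1-|\rho|^2)+\sum_{k=1}^2\overline{\gamma}_{\mathsf{ul},k}\mathsf{g}_k\Big).$$
   Context: $\delta$ is the Dirac delta; $\mathsf{N}_{\mathsf{ul}}$ is zero-mean complex Gaussian white noise with $\mathbb{E}\{\mathsf{N}_{\mathsf{ul}}(\mathbf{r})\mathsf{N}_{\mathsf{ul}}^*(\mathbf{r}')\}=\sigma^2\delta(\mathbf{r}-\mathbf{r}')$, uncorrelated with the unit-power symbols $s_{\mathsf{ul},k}$. In the paper $\mathsf{G}_k(\mathbf{r})=\frac{e^{-\mathrm{j}k_0\|\mathbf{r}-\mathbf{s}_k\|}}{\sqrt{4\pi}\|\mathbf{r}-\mathbf{s}_k\|}\sqrt{\frac{|\mathbf{e}^{\mathsf{T}}(\mathbf{s}_k-\mathbf{r})|}{\|\mathbf{r}-\mathbf{s}_k\|}}$ (line-of-sight model, user locations $\mathbf{s}_k\notin\overline{\mathcal{A}}$, aperture normal $\mathbf{e}$). *)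

theory Defs
  imports "HOL-Analysis.Analysis"
begin

type_synonym pt = "real ^ 3"

definition energy :: "pt set \<Rightarrow> (pt \<Rightarrow> complex) \<Rightarrow> real" where
  "energy A F = (LINT r:A|lebesgue. (cmod (F r))\<^sup>2)"

definition inner_A :: "pt set \<Rightarrow> (pt \<Rightarrow> complex) \<Rightarrow> (pt \<Rightarrow> complex) \<Rightarrow> complex" where
  "inner_A A F1 F2 = (LINT r:A|lebesgue. cnj (F1 r) * F2 r)"

definition L2_on :: "pt set \<Rightarrow> (pt \<Rightarrow> complex) \<Rightarrow> bool" where
  "L2_on A F \<longleftrightarrow> set_borel_measurable lebesgue A F \<and>
                  set_integrable lebesgue A (\<lambda>r. (cmod (F r))\<^sup>2)"

definition chan :: "real \<Rightarrow> real \<Rightarrow> (pt \<Rightarrow> complex) \<Rightarrow> pt \<Rightarrow> complex" where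
  "chan k0 eta G r = \<i> * complex_of_real (k0 * eta / sqrt (4 * pi)) * G r"

definition gammabar :: "real \<Rightarrow> real \<Rightarrow> real \<Rightarrow> real \<Rightarrow> complex \<Rightarrow> real" where
  "gammabar k0 eta sigma2 Au J = Au\<^sup>2 * (cmod J)\<^sup>2 * k0\<^sup>2 * eta\<^sup>2 / (4 * pi * sigma2)"

definition corr :: "pt set \<Rightarrow> (pt \<Rightarrow> complex) \<Rightarrow> (pt \<Rightarrow> complex) \<Rightarrow> complex" where
  "corr A G1 G2 = inner_A A G1 G2 / complex_of_real (sqrt (energy A G1 * energy A G2))"

definition whitened :: "pt set \<Rightarrow> real \<Rightarrow> (pt \<Rightarrow> complex) \<Rightarrow> (pt \<Rightarrow> complex) \<Rightarrow> pt \<Rightarrow> complex" where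
  "whitened A mu2 G2 H1 r = H1 r + complex_of_real mu2 * G2 r * inner_A A G2 H1"

definition rate :: "real \<Rightarrow> real" where
  "rate gamma = log 2 (1 + gamma)"

end

theory Submission
  imports Defs
begin

lemma L2_meas_prod:
  assumes "L2_on A F1" "L2_on A F2"
  shows "set_borel_measurable lebesgue A (\<lambda>r. cnj (F1 r) * F2 r)"
proof -
  have "(\<lambda>x. indicator A x *\<^sub>R (cnj (F1 x) * F2 x)) = (\<lambda>x. cnj (indicator A x *\<^sub>R F1 x) * (indicator A x *\<^sub>R F2 x))"
    by (auto simp: indicator_def)
  have m1: "(\<lambda>x. indicator A x *\<^sub>R F1 x) \<in> borel_measurable lebesgue"
    and m2: "(\<lambda>x. indicator A x *\<^sub>R F2 x) \<in> borel_measurable lebesgue"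
    using assms unfolding L2_on_def set_borel_measurable_def by auto
  have m3: "(\<lambda>x. cnj (indicator A x *\<^sub>R F1 x)) \<in> borel_measurable lebesgue"
    by (rule borel_measurable_continuous_on[where f=cnj, OF _ m1]) (intro continuous_intros)
  have "(\<lambda>x. cnj (indicator A x *\<^sub>R F1 x) * (indicator A x *\<^sub>R F2 x)) \<in> borel_measurable lebesgue"
    by (rule borel_measurable_times[OF m3 m2])
  with \<open>_ = _\<close> show ?thesis unfolding set_borel_measurable_def by simp
qed

lemma L2_int_prod:
  assumes "L2_on A F1" "L2_on A F2"
  shows "set_integrable lebesgue A (\<lambda>r. cnj (F1 r) * F2 r)"
proof (rule set_integrable_bound[where f="\<lambda>r. (cmod (F1 r))\<^sup>2 + (cmod (F2 r))\<^sup>2"])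
  show "set_integrable lebesgue A (\<lambda>r. (cmod (F1 r))\<^sup>2 + (cmod (F2 r))\<^sup>2)"
    using assms unfolding L2_on_def by (intro set_integral_add) auto
  show "set_borel_measurable lebesgue A (\<lambda>r. cnj (F1 r) * F2 r)" using L2_meas_prod[OF assms] .
  have "cmod (cnj (F1 x) * F2 x) \<le> norm ((cmod (F1 x))\<^sup>2 + (cmod (F2 x))\<^sup>2)" for x
  proof -
    have "cmod (cnj (F1 x) * F2 x) = cmod (F1 x) * cmod (F2 x)" by (simp add: norm_mult)
    also have "\<dots> \<le> (cmod (F1 x))\<^sup>2 + (cmod (F2 x))\<^sup>2"
      using sum_squares_bound[of "cmod (F1 x)" "cmod (F2 x)"]
        mult_nonneg_nonneg[OF norm_ge_zero norm_ge_zero, of "F1 x" "F2 x"] by linarith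
    finally show ?thesis by simp
  qed
  then show "AE x in lebesgue. x \<in> A \<longrightarrow> cmod (cnj (F1 x) * F2 x) \<le> norm ((cmod (F1 x))\<^sup>2 + (cmod (F2 x))\<^sup>2)"
    by auto
qed

lemma energy_inner: "complex_of_real (energy A F) = (LINT r:A|lebesgue. cnj (F r) * F r)"
proof -
  have "(\<lambda>r. complex_of_real ((cmod (F r))\<^sup>2)) = (\<lambda>r. cnj (F r) * F r)"
    by (rule ext, subst complex_norm_square, simp add: mult.commute)
  then show ?thesis unfolding energy_def set_integral_complex_of_real[symmetric] by simp
qed

lemma energy_scale: "energy A (\<lambda>r. z * F r) = (cmod z)\<^sup>2 * energy A F"
  unfolding energy_def by (simp add: norm_mult power_mult_distrib)

lemma energy_nonneg: "energy A F \<ge> 0"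
  unfolding energy_def set_lebesgue_integral_def by (intro integral_nonneg_AE) auto

lemma energy_sum:
  assumes "L2_on A F" "L2_on A G"
  shows "complex_of_real (energy A (\<lambda>r. F r + b * G r)) =
     complex_of_real (energy A F) + b * inner_A A F G + cnj b * inner_A A G F + complex_of_real ((cmod b)\<^sup>2 * energy A G)"
proof -
  have e: "cnj (F r + b * G r) * (F r + b * G r) = cnj (F r) * F r + b * (cnj (F r) * G r) + cnj b * (cnj (G r) * F r) + complex_of_real ((cmod b)\<^sup>2) * (cnj (G r) * G r)" for r
  proof -
    have "complex_of_real ((cmod b)\<^sup>2) = b * cnj b" by (rule complex_norm_square)
    then show ?thesis by (simp add: algebra_simps)
  qed
  have i: "set_integrable lebesgue A (\<lambda>r. cnj (P r) * Q r)" if "P \<in> {F,G}" "Q \<in> {F,G}" for P Q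
    using that assms L2_int_prod by auto
  show ?thesis
    unfolding energy_inner inner_A_def e
    using i by (simp add: set_integral_add set_integral_mult_right energy_inner del: of_real_power)
qed

lemma inner_cnj: "inner_A A G F = cnj (inner_A A F G)"
proof -
  have "cnj (inner_A A F G) = (LINT x|lebesgue. cnj (indicator A x *\<^sub>R (cnj (F x) * G x)))"
    unfolding inner_A_def set_lebesgue_integral_def by (simp only: Bochner_Integration.integral_cnj)
  also have "\<dots> = inner_A A G F"
    unfolding inner_A_def set_lebesgue_integral_def by (simp add: mult.commute)
  finally show ?thesis by simp
qed


theorem corollary1:
  fixes A :: "pt set" and k0 eta sigma2 mu2 :: real
    and G :: "nat \<Rightarrow> pt \<Rightarrow> complex" and Au :: "nat \<Rightarrow> real" and J :: "nat \<Rightarrow> complex"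
  assumes A_meas: "A \<in> sets lebesgue"
    and A_fin: "emeasure lebesgue A < \<infinity>" and A_pos: "emeasure lebesgue A > 0"
    and k0: "k0 > 0" and eta: "eta > 0" and sigma2: "sigma2 > 0"
    and G_L2: "\<And>k. k \<in> {1,2} \<Longrightarrow> L2_on A (G k)"
    and g_pos: "\<And>k. k \<in> {1,2} \<Longrightarrow> energy A (G k) > 0"
    and Au_pos: "\<And>k. k \<in> {1,2} \<Longrightarrow> Au k > 0"
    and mu2: "mu2 = - 1 / energy A (G 2)
                    + 1 / (energy A (G 2) * sqrt (1 + gammabar k0 eta sigma2 (Au 2) (J 2) * energy A (G 2)))
           \<or> mu2 = - 1 / energy A (G 2)
                    - 1 / (energy A (G 2) * sqrt (1 + gammabar k0 eta sigma2 (Au 2) (J 2) * energy A (G 2)))"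
  defines "gb \<equiv> \<lambda>k. gammabar k0 eta sigma2 (Au k) (J k)"
    and "g \<equiv> \<lambda>k. energy A (G k)"
    and "rho \<equiv> corr A (G 1) (G 2)"
    and "snr1 \<equiv> (Au 1)\<^sup>2 * (cmod (J 1))\<^sup>2 / sigma2 * energy A (whitened A mu2 (G 2) (chan k0 eta (G 1)))"
    and "snr2 \<equiv> (Au 2)\<^sup>2 * (cmod (J 2))\<^sup>2 / sigma2 * energy A (chan k0 eta (G 2))"
  shows "rate snr1 = log 2 (1 + gb 1 * g 1 * (1 - gb 2 * g 2 * (cmod rho)\<^sup>2 / (1 + gb 2 * g 2)))
       \<and> rate snr2 = log 2 (1 + gb 2 * g 2)
       \<and> rate snr1 + rate snr2
           = log 2 (1 + gb 1 * gb 2 * g 1 * g 2 * (1 - (cmod rho)\<^sup>2) + (\<Sum>k\<in>{1,2}. gb k * g k))"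
proof -
  define c where "c = k0 * eta / sqrt (4 * pi)"
  define a where "a = inner_A A (G 2) (G 1)"
  define K where "K = (cmod a)\<^sup>2"
  have L1: "L2_on A (G 1)" and L2: "L2_on A (G 2)" using G_L2 by auto
  have g1: "g 1 > 0" and g2: "g 2 > 0" using g_pos unfolding g_def by auto
  have gb_nn: "gb k \<ge> 0" for k unfolding gb_def gammabar_def using sigma2 by simp
  have c2: "c\<^sup>2 = k0\<^sup>2 * eta\<^sup>2 / (4 * pi)"
    unfolding c_def by (simp add: power_divide power_mult_distrib)
  have chan_eq: "chan k0 eta F = (\<lambda>r. (\<i> * complex_of_real c) * F r)" for F
    unfolding chan_def c_def by (rule ext) (simp add: mult.assoc)
  have inner_chan: "inner_A A (G 2) (chan k0 eta (G 1)) = (\<i> * complex_of_real c) * a"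
    unfolding chan_eq a_def inner_A_def by (simp add: mult.left_commute)
  define b where "b = complex_of_real mu2 * a"
  have wh: "whitened A mu2 (G 2) (chan k0 eta (G 1)) = (\<lambda>r. (\<i> * complex_of_real c) * (G 1 r + b * G 2 r))"
    unfolding whitened_def inner_chan b_def by (rule ext) (simp add: chan_eq algebra_simps)
  have cm: "(cmod (\<i> * complex_of_real c))\<^sup>2 = c\<^sup>2" by (simp add: norm_mult)
  have i12: "inner_A A (G 1) (G 2) = cnj a" unfolding a_def by (rule inner_cnj)
  have Ecx: "complex_of_real (energy A (\<lambda>r. G 1 r + b * G 2 r)) =
      complex_of_real (g 1 + 2 * mu2 * K + mu2\<^sup>2 * K * g 2)"
  proof -
    have ak: "a * cnj a = complex_of_real K" unfolding K_def using complex_norm_square[of a] by simp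
    have bk: "(cmod b)\<^sup>2 = mu2\<^sup>2 * K" unfolding b_def K_def by (simp add: norm_mult power_mult_distrib)
    show ?thesis
      unfolding energy_sum[OF L1 L2] i12 bk a_def[symmetric]
      using ak unfolding g_def b_def by (simp add: algebra_simps)
  qed
  have E: "energy A (\<lambda>r. G 1 r + b * G 2 r) = g 1 + 2 * mu2 * K + mu2\<^sup>2 * K * g 2"
    using Ecx of_real_eq_iff by blast
  have d: "1 + gb 2 * g 2 > 0" "1 + g 2 * gb 2 > 0" using gb_nn[of 2] g2 by (simp_all add: add_pos_nonneg)
  define s where "s = sqrt (1 + gb 2 * g 2)"
  have s_pos: "s > 0" unfolding s_def using gb_nn[of 2] g2 by (simp add: add_pos_nonneg)
  have s2: "s\<^sup>2 = 1 + gb 2 * g 2" unfolding s_def using gb_nn[of 2] g2 by simp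
  have mu2': "mu2 * g 2 + 1 = 1 / s \<or> mu2 * g 2 + 1 = - 1 / s"
    using mu2 g2 unfolding s_def g_def gb_def by (auto simp: field_simps)
  have sq: "(mu2 * g 2 + 1)\<^sup>2 = 1 / (1 + gb 2 * g 2)"
    using mu2' s2 by (auto simp: power_divide)
  have E2: "g 1 + 2 * mu2 * K + mu2\<^sup>2 * K * g 2 = g 1 - gb 2 * K / (1 + gb 2 * g 2)"
  proof -
    have "2 * mu2 * K + mu2\<^sup>2 * K * g 2 = K / g 2 * ((mu2 * g 2 + 1)\<^sup>2 - 1)"
      using g2 by (simp add: field_simps power2_eq_square)
    also have "\<dots> = - gb 2 * K / (1 + gb 2 * g 2)"
      unfolding sq using g2 d by (simp add: field_simps)
    finally show ?thesis by simp
  qed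
  have snr1_eq: "snr1 = gb 1 * (g 1 - gb 2 * K / (1 + gb 2 * g 2))"
    unfolding snr1_def wh energy_scale cm E E2 c2 gb_def gammabar_def by (simp add: field_simps)
  have snr1_nn: "snr1 \<ge> 0" unfolding snr1_def using sigma2 energy_nonneg by simp
  have snr2_eq: "snr2 = gb 2 * g 2"
    unfolding snr2_def chan_eq energy_scale cm c2 gb_def gammabar_def g_def by (simp add: field_simps)
  have rho2: "(cmod rho)\<^sup>2 = K / (g 1 * g 2)"
  proof -
    have "rho = cnj a / complex_of_real (sqrt (g 1 * g 2))"
      unfolding rho_def corr_def i12 g_def by simp
    then have "cmod rho = cmod a / sqrt (g 1 * g 2)" using g1 g2 by (simp add: norm_divide)
    then show ?thesis unfolding K_def using g1 g2 by (simp add: power_divide)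
  qed
  have R1: "rate snr1 = log 2 (1 + gb 1 * g 1 * (1 - gb 2 * g 2 * (cmod rho)\<^sup>2 / (1 + gb 2 * g 2)))"
  proof -
    have x: "gb 2 * g 2 * (K / (g 1 * g 2)) = g 1 * (gb 2 * K / g 1 / g 1)" using g1 g2 by (simp add: field_simps power2_eq_square)
    have "gb 1 * g 1 * (1 - gb 2 * g 2 * (K / (g 1 * g 2)) / (1 + gb 2 * g 2))
        = gb 1 * g 1 * (1 - (gb 2 * K / (1 + gb 2 * g 2)) / g 1)"
      using g1 g2 by (simp add: field_simps)
    also have "\<dots> = snr1"
    proof -
      have gen: "gb 1 * g 1 * (1 - Y / g 1) = gb 1 * (g 1 - Y)" for Y using g1 by (simp add: field_simps)
      show ?thesis unfolding snr1_eq by (rule gen)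
    qed
    finally have "gb 1 * g 1 * (1 - gb 2 * g 2 * (K / (g 1 * g 2)) / (1 + gb 2 * g 2)) = snr1" .
    then show ?thesis unfolding rate_def rho2 by simp
  qed
  have R2: "rate snr2 = log 2 (1 + gb 2 * g 2)" unfolding rate_def snr2_eq ..
  have R3: "rate snr1 + rate snr2
           = log 2 (1 + gb 1 * gb 2 * g 1 * g 2 * (1 - (cmod rho)\<^sup>2) + (\<Sum>k\<in>{1,2}. gb k * g k))"
  proof -
    have "rate snr1 + rate snr2 = log 2 ((1 + snr1) * (1 + snr2))"
      unfolding rate_def using snr1_nn snr2_eq gb_nn[of 2] g2
      by (simp add: log_mult_pos add_pos_nonneg)
    also have "(1 + snr1) * (1 + snr2) = 1 + gb 1 * gb 2 * g 1 * g 2 * (1 - (cmod rho)\<^sup>2) + (\<Sum>k\<in>{1,2}. gb k * g k)"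
      unfolding snr1_eq snr2_eq rho2 using g1 g2 d by (simp add: field_simps)
    finally show ?thesis .
  qed
  show ?thesis using R1 R2 R3 by blast
qed

end
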